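(* \[ \mathbf{E}[1/p_r] = \begin{cases} \frac{3\sqrt{2}+5}{12p_i} & p_i \in (1/2, \frac{1+\sqrt{2}}{4}] \\ \frac{3+2\sqrt{2}}{6p_i} & p_i \in (\frac{1+\sqrt{2}}{4}, \frac{2+\sqrt{2}}{4}] \\ \frac{3\sqrt{2}+5}{6p_i} & p_i \in (\frac{2+\sqrt{2}}{4}, 1] \end{cases}, \qquad \mathbf{E}\left[1/p_r^2\right] = \begin{cases} \frac{5(3+2\sqrt{2})}{48p^2_i} & p_i \in (1/2, \frac{1+\sqrt{2}}{4}] \\ \frac{3+2\sqrt{2}}{6p^2_i} & p_i \in (\frac{1+\sqrt{2}}{4}, \frac{2+\sqrt{2}}{4}] \\ \frac{5(3+2\sqrt{2})}{12p^2_i} & p_i \in (\frac{2+\sqrt{2}}{4}, 1] \end{cases}. \]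
   Context: $\lg=\log_2$, and for real $x>0$, $p_x = x/2^{\lceil \lg x\rceil}$. In 2Merge$(A,B,T)$ with $T=(t_1,\dots,t_{i-2})$ sorted, $i$ even, $i\ge4$, after ensuring $A<B$, Step 2 compares $A$ with $t_{\lceil(1-2^{-r/2})i\rceil}$ for $r=1,2,\dots$ up to $2\lg i$ and stops at the first $r$ with $A<t_{\lceil(1-2^{-r/2})i\rceil}$; $r$ is this number of comparisons. The inserted elements are in uniformly random distinct positions, so given $A<B$, $\mathbf{Pr}[t_{\ell-1}<A<t_\ell]=(i-\ell)/\binom{i}{2}$, and $\mathbf{Pr}[r]=2^{-r}\pm O\!\left(\frac{1}{2^{r/2}i}\right)$. Define $w_r := (\sqrt{2}-1)2^{-r/2}i$ and $p_r := p_{w_r} = w_r/2^{\lceil\lg w_r\rceil}$. Expectations are over $r$. *)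

theory Defs
  imports Complex_Main
begin

definition pnorm :: "real \<Rightarrow> real" where
  "pnorm x = x / 2 powr (real_of_int \<lceil>log 2 x\<rceil>)"

definition wr :: "nat \<Rightarrow> nat \<Rightarrow> real" where
  "wr i r = (sqrt 2 - 1) * 2 powr (- real r / 2) * real i"

definition pr :: "nat \<Rightarrow> nat \<Rightarrow> real" where
  "pr i r = pnorm (wr i r)"

text \<open>Expectation over r = 1,2,... with Pr[r] = 2^(-r).\<close>
definition Er :: "(nat \<Rightarrow> real) \<Rightarrow> real" where
  "Er f = (\<Sum>r. (1/2) ^ (Suc r) * f (Suc r))"

end

theory Submission
  imports Defs
begin

lemma wr_odd:
  assumes "real i = p * 2 powr (real_of_int c)"
  shows "wr i (Suc (2*m)) = (2 - sqrt 2) * p * 2 powr (real_of_int (c - int m - 1))"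
proof -
  have e: "- real (Suc (2*m)) / 2 = 1/2 + (- real m - 1)" by simp
  have a: "2 powr (- real (Suc (2*m)) / 2) = sqrt 2 * 2 powr (- real m - 1)"
    unfolding e powr_add by (simp add: powr_half_sqrt)
  have b: "2 powr (real_of_int (c - int m - 1)) = 2 powr (- real m - 1) * 2 powr (real_of_int c)"
  proof -
    have "real_of_int (c - int m - 1) = (- real m - 1) + real_of_int c" by simp
    thus ?thesis by (simp only: powr_add)
  qed
  have s: "(sqrt 2 - 1) * sqrt 2 = 2 - sqrt 2" by (simp add: algebra_simps)
  show ?thesis unfolding wr_def a b assms
    using s by (simp add: algebra_simps)
qed

lemma wr_even:
  assumes "real i = p * 2 powr (real_of_int c)"
  shows "wr i (Suc (Suc (2*m))) = (sqrt 2 - 1) * p * 2 powr (real_of_int (c - int m - 1))"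
proof -
  have e: "- real (Suc (Suc (2*m))) / 2 = (- real m - 1)" by simp
  have b: "2 powr (real_of_int (c - int m - 1)) = 2 powr (- real m - 1) * 2 powr (real_of_int c)"
  proof -
    have "real_of_int (c - int m - 1) = (- real m - 1) + real_of_int c" by simp
    thus ?thesis by (simp only: powr_add)
  qed
  show ?thesis unfolding wr_def e b assms by (simp add: algebra_simps)
qed


lemma pnorm_char:
  assumes "1/2 < y" "y \<le> 1" "x = y * 2 powr (real_of_int n)"
  shows "pnorm x = y"
proof -
  have y0: "y > 0" using assms by simp
  have "log 2 x = log 2 y + n" using assms y0 by (simp add: log_mult)
  moreover have "log 2 y \<le> 0" using assms y0 by simp
  moreover have "log 2 y > -1"
  proof -
    have "log 2 (1/2) < log 2 y" using assms by simp
    thus ?thesis by (simp add: log_divide)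
  qed
  ultimately have "\<lceil>log 2 x\<rceil> = n" by (simp add: ceiling_eq_iff)
  thus ?thesis using assms by (simp add: pnorm_def)
qed

lemma shift2: "a * 2 powr (real_of_int n) = (2*a) * 2 powr (real_of_int (n - 1))"
proof -
  have e: "real_of_int n = 1 + real_of_int (n - 1)" by simp
  have "2 powr (real_of_int n) = 2 powr 1 * 2 powr (real_of_int (n - 1))"
    by (subst e) (simp only: powr_add)
  thus ?thesis by simp
qed

lemma Er_par:
  assumes "\<And>r. f (Suc r) = (if even r then A else B)"
  shows "Er f = 2*A/3 + B/3"
proof -
  have eq: "(1/2::real) ^ Suc r * f (Suc r) = (A+B)/2 * (1/2)^(Suc r) - (A-B)/2 * (-1/2)^(Suc r)" for r
  proof (cases "even r")
    case True
    have "(-1/2::real)^(Suc r) = - ((1/2)^(Suc r))"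
      using True by (simp add: power_minus_odd[symmetric])
    thus ?thesis using assms[of r] True by (simp add: field_simps)
  next
    case False
    have "(-1/2::real)^(Suc r) = (1/2)^(Suc r)"
      using False by (simp add: power_minus_even[symmetric])
    thus ?thesis using assms[of r] False by (simp add: field_simps)
  qed
  have g1: "(\<lambda>r. (1/2::real)^(Suc r)) sums 1"
    using geometric_sums[of "1/2::real"] sums_mult[of "\<lambda>r. (1/2::real)^r" 2 "1/2"] by simp
  have g2: "(\<lambda>r. (-1/2::real)^(Suc r)) sums (-1/3)"
    using sums_mult[OF geometric_sums[of "-1/2::real"], of "-1/2"] by simp
  have "(\<lambda>r. (1/2::real) ^ Suc r * f (Suc r)) sums ((A+B)/2 * 1 - (A-B)/2 * (-1/3))"
    unfolding eq by (intro sums_diff sums_mult g1 g2)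
  hence "Er f = (A+B)/2 * 1 - (A-B)/2 * (-1/3)" unfolding Er_def by (rule sums_unique[symmetric])
  thus ?thesis by (simp add: field_simps)
qed

lemma sqrt2_bounds: "1.41 < sqrt (2::real)" "sqrt (2::real) < 1.42"
proof -
  show "1.41 < sqrt (2::real)" by (rule real_less_rsqrt) (simp add: power2_eq_square)
  have "sqrt (2::real) < sqrt (1.42^2)" by (subst real_sqrt_less_iff) (simp add: power2_eq_square)
  thus "sqrt (2::real) < 1.42" by simp
qed

lemma pr_odd:
  assumes "real i = p * 2 powr (real_of_int c)" "1/2 < p" "p \<le> 1"
  shows "pr i (Suc (2*m)) = (if p \<le> (2 + sqrt 2)/4 then 2*(2 - sqrt 2)*p else (2 - sqrt 2)*p)"
proof -
  note sb = sqrt2_bounds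
  have w: "wr i (Suc (2*m)) = (2 - sqrt 2) * p * 2 powr (real_of_int (c - int m - 1))"
    by (rule wr_odd[OF assms(1)])
  show ?thesis
  proof (cases "p \<le> (2 + sqrt 2)/4")
    case True
    have "2*(2 - sqrt 2)*p \<le> 2*(2 - sqrt 2)*((2 + sqrt 2)/4)"
      by (rule mult_left_mono) (use True sb in auto)
    also have "\<dots> = 1" by (simp add: algebra_simps)
    finally have u: "2*(2 - sqrt 2)*p \<le> 1" .
    have "2*(2 - sqrt 2)*(1/2) < 2*(2 - sqrt 2)*p"
      by (rule mult_strict_left_mono) (use assms sb in auto)
    moreover have "1/2 < 2*(2 - sqrt 2)*(1/2)" using sb by simp
    ultimately have l: "1/2 < 2*(2 - sqrt 2)*p" by linarith
    have "pr i (Suc (2*m)) = 2*(2 - sqrt 2)*p"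
      unfolding pr_def w shift2[of _ "c - int m - 1"]
      by (rule pnorm_char[OF l u, where n="c - int m - 1 - 1"]) (simp add: algebra_simps)
    thus ?thesis using True by simp
  next
    case False
    have "(2 - sqrt 2)*((2 + sqrt 2)/4) < (2 - sqrt 2)*p"
      by (rule mult_strict_left_mono) (use False sb in auto)
    hence l: "1/2 < (2 - sqrt 2)*p" by (simp add: algebra_simps)
    have "(2 - sqrt 2)*p \<le> (2 - sqrt 2)*1"
      by (rule mult_left_mono) (use assms sb in auto)
    moreover have "(2 - sqrt 2)*1 \<le> 1" using sb by simp
    ultimately have u: "(2 - sqrt 2)*p \<le> 1" by linarith
    have "pr i (Suc (2*m)) = (2 - sqrt 2)*p"
      unfolding pr_def w by (rule pnorm_char[OF l u, where n="c - int m - 1"]) simp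
    thus ?thesis using False by simp
  qed
qed

lemma pr_even:
  assumes "real i = p * 2 powr (real_of_int c)" "1/2 < p" "p \<le> 1"
  shows "pr i (Suc (Suc (2*m))) = (if p \<le> (1 + sqrt 2)/4 then 4*(sqrt 2 - 1)*p else 2*(sqrt 2 - 1)*p)"
proof -
  note sb = sqrt2_bounds
  have w: "wr i (Suc (Suc (2*m))) = (sqrt 2 - 1) * p * 2 powr (real_of_int (c - int m - 1))"
    by (rule wr_even[OF assms(1)])
  show ?thesis
  proof (cases "p \<le> (1 + sqrt 2)/4")
    case True
    have "4*(sqrt 2 - 1)*p \<le> 4*(sqrt 2 - 1)*((1 + sqrt 2)/4)"
      by (rule mult_left_mono) (use True sb in auto)
    also have "\<dots> = (sqrt 2 - 1)*(1 + sqrt 2)" by simp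
    also have "\<dots> = sqrt 2 * sqrt 2 - 1" by (simp add: algebra_simps)
    also have "\<dots> = 1" by simp
    finally have u: "4*(sqrt 2 - 1)*p \<le> 1" .
    have "4*(sqrt 2 - 1)*(1/2) < 4*(sqrt 2 - 1)*p"
      by (rule mult_strict_left_mono) (use assms sb in auto)
    moreover have "1/2 < 4*(sqrt 2 - 1)*(1/2)" using sb by simp
    ultimately have l: "1/2 < 4*(sqrt 2 - 1)*p" by linarith
    have "pr i (Suc (Suc (2*m))) = 4*(sqrt 2 - 1)*p"
      unfolding pr_def w shift2[of _ "c - int m - 1"] shift2[of _ "c - int m - 1 - 1"]
      by (rule pnorm_char[OF l u, where n="c - int m - 1 - 1 - 1"]) (simp add: algebra_simps)
    thus ?thesis using True by simp
  next
    case False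
    have "2*(sqrt 2 - 1)*((1 + sqrt 2)/4) < 2*(sqrt 2 - 1)*p"
      by (rule mult_strict_left_mono) (use False sb in auto)
    moreover have "2*(sqrt 2 - 1)*((1 + sqrt 2)/4) = 1/2"
    proof -
      have "2*(sqrt 2 - 1)*((1 + sqrt 2)/4) = (sqrt 2 * sqrt 2 - 1)/2" by (simp add: field_simps)
      thus ?thesis by simp
    qed
    ultimately have l: "1/2 < 2*(sqrt 2 - 1)*p" by linarith
    have "2*(sqrt 2 - 1)*p \<le> 2*(sqrt 2 - 1)*1"
      by (rule mult_left_mono) (use assms sb in auto)
    moreover have "2*(sqrt 2 - 1)*1 \<le> 1" using sb by simp
    ultimately have u: "2*(sqrt 2 - 1)*p \<le> 1" by linarith
    have "pr i (Suc (Suc (2*m))) = 2*(sqrt 2 - 1)*p"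
      unfolding pr_def w shift2[of _ "c - int m - 1"] by (rule pnorm_char[OF l u, where n="c - int m - 1 - 1"]) (simp add: algebra_simps)
    thus ?thesis using False by simp
  qed
qed

lemma k1: "1/(2 - sqrt 2) = (2 + sqrt 2)/2"
proof -
  have "(2 - sqrt 2)*(2 + sqrt 2) = 2" by (simp add: algebra_simps)
  moreover have "2 - sqrt 2 \<noteq> 0" using sqrt2_bounds by auto
  ultimately show ?thesis by (simp add: field_simps)
qed

lemma k2: "1/(sqrt 2 - 1) = sqrt 2 + 1"
proof -
  have "(sqrt 2 - 1)*(sqrt 2 + 1) = 1" by (simp add: algebra_simps)
  moreover have "sqrt 2 - 1 \<noteq> 0" using sqrt2_bounds by auto
  ultimately show ?thesis by (simp add: field_simps)
qed

lemma sq1: "(2 + sqrt 2)^2 = 6 + 4 * sqrt (2::real)"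
  by (simp add: power2_eq_square algebra_simps)
lemma sq2: "(sqrt 2 + 1)^2 = 3 + 2 * sqrt (2::real)"
  by (simp add: power2_eq_square algebra_simps)

lemma Er_case:
  assumes "\<And>m. pr i (Suc(2*m)) = a" "\<And>m. pr i (Suc(Suc(2*m))) = b"
  shows "Er (\<lambda>r. 1/pr i r) = 2*(1/a)/3 + (1/b)/3"
    and "Er (\<lambda>r. 1/(pr i r)^2) = 2*(1/a)^2/3 + (1/b)^2/3"
proof -
  have k: "pr i (Suc r) = (if even r then a else b)" for r
  proof (cases "even r")
    case True then obtain m where "r = 2*m" by (elim evenE)
    thus ?thesis using assms True by simp
  next
    case False then obtain m where "r = 2*m+1" by (elim oddE)
    thus ?thesis using assms False by simp
  qed
  show "Er (\<lambda>r. 1/pr i r) = 2*(1/a)/3 + (1/b)/3"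
    by (rule Er_par) (simp add: k)
  show "Er (\<lambda>r. 1/(pr i r)^2) = 2*(1/a)^2/3 + (1/b)^2/3"
    by (rule Er_par) (simp add: k power_one_over)
qed

theorem lemma4:
  fixes i :: nat
  assumes "even i" and "i \<ge> 4"
  defines "p \<equiv> pnorm (real i)"
  shows "(1/2 < p \<and> p \<le> (1 + sqrt 2)/4 \<longrightarrow>
            Er (\<lambda>r. 1 / pr i r) = (3 * sqrt 2 + 5) / (12 * p) \<and>
            Er (\<lambda>r. 1 / (pr i r)^2) = 5 * (3 + 2 * sqrt 2) / (48 * p^2))
       \<and> ((1 + sqrt 2)/4 < p \<and> p \<le> (2 + sqrt 2)/4 \<longrightarrow>
            Er (\<lambda>r. 1 / pr i r) = (3 + 2 * sqrt 2) / (6 * p) \<and>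
            Er (\<lambda>r. 1 / (pr i r)^2) = (3 + 2 * sqrt 2) / (6 * p^2))
       \<and> ((2 + sqrt 2)/4 < p \<and> p \<le> 1 \<longrightarrow>
            Er (\<lambda>r. 1 / pr i r) = (3 * sqrt 2 + 5) / (6 * p) \<and>
            Er (\<lambda>r. 1 / (pr i r)^2) = 5 * (3 + 2 * sqrt 2) / (12 * p^2))"
proof -
  note sb = sqrt2_bounds
  define c where "c = \<lceil>log 2 (real i)\<rceil>"
  have pd: "p = real i / 2 powr (real_of_int c)" unfolding p_def pnorm_def c_def by simp
  have c: "real i = p * 2 powr (real_of_int c)" unfolding pd by simp
  have A1: "1/(2*(2 - sqrt 2)*p) = (2 + sqrt 2)/(4*p)"
  proof -
    have "1/(2*(2 - sqrt 2)*p) = (1/(2 - sqrt 2))/(2*p)" by simp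
    thus ?thesis unfolding k1 by simp
  qed
  have A2: "1/((2 - sqrt 2)*p) = (2 + sqrt 2)/(2*p)"
  proof -
    have "1/((2 - sqrt 2)*p) = (1/(2 - sqrt 2))/p" by simp
    thus ?thesis unfolding k1 by simp
  qed
  have B1: "1/(4*(sqrt 2 - 1)*p) = (sqrt 2 + 1)/(4*p)"
  proof -
    have "1/(4*(sqrt 2 - 1)*p) = (1/(sqrt 2 - 1))/(4*p)" by simp
    thus ?thesis unfolding k2 by simp
  qed
  have B2: "1/(2*(sqrt 2 - 1)*p) = (sqrt 2 + 1)/(2*p)"
  proof -
    have "1/(2*(sqrt 2 - 1)*p) = (1/(sqrt 2 - 1))/(2*p)" by simp
    thus ?thesis unfolding k2 by simp
  qed
  have S1: "((2 + sqrt 2)/x)^2 = (6 + 4*sqrt 2)/x^2" for x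
    by (simp add: power_divide sq1)
  have S2: "((sqrt 2 + 1)/x)^2 = (3 + 2*sqrt 2)/x^2" for x
    by (simp add: power_divide sq2)
  have C1: "1/2 < p \<and> p \<le> (1 + sqrt 2)/4 \<longrightarrow>
            Er (\<lambda>r. 1 / pr i r) = (3 * sqrt 2 + 5) / (12 * p) \<and>
            Er (\<lambda>r. 1 / (pr i r)^2) = 5 * (3 + 2 * sqrt 2) / (48 * p^2)"
  proof
    assume h: "1/2 < p \<and> p \<le> (1 + sqrt 2)/4"
    have h1: "p \<le> 1" "p \<le> (2 + sqrt 2)/4" using h sb by auto
    have po: "pr i (Suc(2*m)) = 2*(2 - sqrt 2)*p" for m using pr_odd[OF c, of m] h h1 by simp
    have pe: "pr i (Suc(Suc(2*m))) = 4*(sqrt 2 - 1)*p" for m using pr_even[OF c, of m] h h1 by simp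
    note E = Er_case[OF po pe]
    show "Er (\<lambda>r. 1 / pr i r) = (3 * sqrt 2 + 5) / (12 * p) \<and>
            Er (\<lambda>r. 1 / (pr i r)^2) = 5 * (3 + 2 * sqrt 2) / (48 * p^2)"
      unfolding E A1 B1 S1 S2 using h by (simp add: field_simps)
  qed
  have C2: "(1 + sqrt 2)/4 < p \<and> p \<le> (2 + sqrt 2)/4 \<longrightarrow>
            Er (\<lambda>r. 1 / pr i r) = (3 + 2 * sqrt 2) / (6 * p) \<and>
            Er (\<lambda>r. 1 / (pr i r)^2) = (3 + 2 * sqrt 2) / (6 * p^2)"
  proof
    assume h: "(1 + sqrt 2)/4 < p \<and> p \<le> (2 + sqrt 2)/4"
    have h1: "p \<le> 1" "1/2 < p" using h sb by auto
    have po: "pr i (Suc(2*m)) = 2*(2 - sqrt 2)*p" for m using pr_odd[OF c, of m] h h1 by simp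
    have pe: "pr i (Suc(Suc(2*m))) = 2*(sqrt 2 - 1)*p" for m using pr_even[OF c, of m] h h1 by simp
    note E = Er_case[OF po pe]
    show "Er (\<lambda>r. 1 / pr i r) = (3 + 2 * sqrt 2) / (6 * p) \<and>
            Er (\<lambda>r. 1 / (pr i r)^2) = (3 + 2 * sqrt 2) / (6 * p^2)"
      unfolding E A1 B2 S1 S2 using h1 by (simp add: field_simps)
  qed
  have C3: "(2 + sqrt 2)/4 < p \<and> p \<le> 1 \<longrightarrow>
            Er (\<lambda>r. 1 / pr i r) = (3 * sqrt 2 + 5) / (6 * p) \<and>
            Er (\<lambda>r. 1 / (pr i r)^2) = 5 * (3 + 2 * sqrt 2) / (12 * p^2)"
  proof
    assume h: "(2 + sqrt 2)/4 < p \<and> p \<le> 1"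
    have h1: "1/2 < p" "\<not> p \<le> (1 + sqrt 2)/4" using h sb by auto
    have po: "pr i (Suc(2*m)) = (2 - sqrt 2)*p" for m using pr_odd[OF c, of m] h h1 by simp
    have pe: "pr i (Suc(Suc(2*m))) = 2*(sqrt 2 - 1)*p" for m using pr_even[OF c, of m] h h1 by simp
    note E = Er_case[OF po pe]
    show "Er (\<lambda>r. 1 / pr i r) = (3 * sqrt 2 + 5) / (6 * p) \<and>
            Er (\<lambda>r. 1 / (pr i r)^2) = 5 * (3 + 2 * sqrt 2) / (12 * p^2)"
      unfolding E A2 B2 S1 S2 using h1 by (simp add: field_simps)
  qed
  show ?thesis using C1 C2 C3 by blast
qed

end
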